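(* Let $P=\{S_1,\ldots,S_n\}$ be a homothetic square packing with contact graph $G=([n],E)$ whose radii $r_1,\ldots,r_n$ satisfy the weak generic condition. If either of the graphs $([n],E_x)$, $([n],E_y)$ contains a cycle $(n_1,\ldots,n_k)$ with $k\le n-2$, then $k=4$ and the squares $S_{n_1},S_{n_2},S_{n_3},S_{n_4}$ share a corner.
   Context: Let $S=\{(x,y): -1\le x,y\le 1\}$. A homothetic packing of $n$ squares is a set $P=\{S_1,\ldots,S_n\}$ with $S_i=r_iS+p_i$, $r_i>0$ (radii), $p_i=(x_i,y_i)\in\mathbb{R}^2$ (centres), such that distinct squares have disjoint interiors. Its contact graph is $G=([n],E)$ where $\{i,j\}\in E$ iff $i\ne j$ and $S_i\cap S_j\ne\emptyset$; $E_x$ is the set of pairs $\{i,j\}\in E$ with $r_i+r_j=|x_i-x_j|\ge|y_i-y_j|$ and $E_y$ the set with $r_i+r_j=|y_i-y_j|\ge|x_i-x_j|$. The radii satisfy the weak generic condition if the only function $\sigma:[n]\to\{-1,0,1\}$ with at least $4$ zeroes and $\sum_{i=1}^n\sigma_ir_i=0$ is the zero function. Four squares share a corner if they have a common point which is a corner of each of them. *)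

theory Defs
  imports "HOL-Analysis.Analysis"
begin

definition sq :: "real \<Rightarrow> real \<times> real \<Rightarrow> (real \<times> real) set" where
  "sq r p = {q. \<bar>fst q - fst p\<bar> \<le> r \<and> \<bar>snd q - snd p\<bar> \<le> r}"

definition homothetic_packing :: "nat \<Rightarrow> (nat \<Rightarrow> real) \<Rightarrow> (nat \<Rightarrow> real \<times> real) \<Rightarrow> bool" where
  "homothetic_packing n r p \<longleftrightarrow>
     (\<forall>i\<in>{1..n}. r i > 0) \<and>
     (\<forall>i\<in>{1..n}. \<forall>j\<in>{1..n}. i \<noteq> j \<longrightarrow>
        interior (sq (r i) (p i)) \<inter> interior (sq (r j) (p j)) = {})"

definition contact_edges :: "nat \<Rightarrow> (nat \<Rightarrow> real) \<Rightarrow> (nat \<Rightarrow> real \<times> real) \<Rightarrow> nat set set" where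
  "contact_edges n r p = {{i, j} | i j. i \<in> {1..n} \<and> j \<in> {1..n} \<and> i \<noteq> j \<and>
      sq (r i) (p i) \<inter> sq (r j) (p j) \<noteq> {}}"

definition edges_x :: "nat \<Rightarrow> (nat \<Rightarrow> real) \<Rightarrow> (nat \<Rightarrow> real \<times> real) \<Rightarrow> nat set set" where
  "edges_x n r p = {{i, j} | i j. {i, j} \<in> contact_edges n r p \<and>
      r i + r j = \<bar>fst (p i) - fst (p j)\<bar> \<and> \<bar>fst (p i) - fst (p j)\<bar> \<ge> \<bar>snd (p i) - snd (p j)\<bar>}"

definition edges_y :: "nat \<Rightarrow> (nat \<Rightarrow> real) \<Rightarrow> (nat \<Rightarrow> real \<times> real) \<Rightarrow> nat set set" where
  "edges_y n r p = {{i, j} | i j. {i, j} \<in> contact_edges n r p \<and>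
      r i + r j = \<bar>snd (p i) - snd (p j)\<bar> \<and> \<bar>snd (p i) - snd (p j)\<bar> \<ge> \<bar>fst (p i) - fst (p j)\<bar>}"

definition weak_generic :: "nat \<Rightarrow> (nat \<Rightarrow> real) \<Rightarrow> bool" where
  "weak_generic n r \<longleftrightarrow>
     (\<forall>\<sigma> :: nat \<Rightarrow> int. (\<forall>i\<in>{1..n}. \<sigma> i \<in> {-1, 0, 1}) \<and>
        card {i\<in>{1..n}. \<sigma> i = 0} \<ge> 4 \<and> (\<Sum>i\<in>{1..n}. of_int (\<sigma> i) * r i) = 0
        \<longrightarrow> (\<forall>i\<in>{1..n}. \<sigma> i = 0))"

definition is_cycle :: "nat \<Rightarrow> nat set set \<Rightarrow> nat list \<Rightarrow> bool" where
  "is_cycle n F c \<longleftrightarrow> length c \<ge> 3 \<and> distinct c \<and> set c \<subseteq> {1..n} \<and>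
     (\<forall>i < length c. {c ! i, c ! ((i + 1) mod length c)} \<in> F)"

definition corners :: "real \<Rightarrow> real \<times> real \<Rightarrow> (real \<times> real) set" where
  "corners r p = {(fst p + a * r, snd p + b * r) | a b. a \<in> {-1, 1} \<and> b \<in> {-1, 1}}"

definition share_corner :: "(nat \<Rightarrow> real) \<Rightarrow> (nat \<Rightarrow> real \<times> real) \<Rightarrow> nat set \<Rightarrow> bool" where
  "share_corner r p I \<longleftrightarrow> (\<exists>q. \<forall>i\<in>I. q \<in> corners (r i) (p i))"

end

theory Submission
  imports Defs
begin

lemma wg_pair:
  assumes wg: "weak_generic n r" and u: "u \<in> {1..n}" and v: "v \<in> {1..n}" and uv: "u \<noteq> v" and n6: "n \<ge> 6"
  shows "r u \<noteq> r v"
proof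
  assume eq: "r u = r v"
  define s :: "nat \<Rightarrow> int" where "s i = (if i = u then 1 else if i = v then -1 else 0)" for i
  have "{1..n} - {u, v} \<subseteq> {i\<in>{1..n}. s i = 0}" unfolding s_def by auto
  moreover have "card ({1..n} - {u, v}) = n - 2" using u v uv by (simp add: card_Diff_subset)
  ultimately have c4: "card {i\<in>{1..n}. s i = 0} \<ge> 4"
    using n6 card_mono[of "{i\<in>{1..n}. s i = 0}" "{1..n} - {u, v}"] by simp
  have "(\<Sum>i\<in>{1..n}. of_int (s i) * r i) = (\<Sum>i\<in>{1..n}. (if i = u then r u else 0) - (if i = v then r v else 0))"
    by (rule sum.cong) (auto simp: s_def uv)
  also have "\<dots> = 0" using u v eq by (simp add: sum_subtractf)
  finally have "(\<Sum>i\<in>{1..n}. of_int (s i) * r i) = 0" .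
  then have "\<forall>i\<in>{1..n}. s i = 0"
  proof -
    have "\<forall>i\<in>{1..n}. s i \<in> {-1,0,1}" by (simp add: s_def)
    then show ?thesis using wg c4 \<open>(\<Sum>i\<in>{1..n}. of_int (s i) * r i) = 0\<close> unfolding weak_generic_def by blast
  qed
  then have "s u = 0" using u by blast
  then show False by (simp add: s_def)
qed

lemma open_meet:
  fixes X1 Y1 R1 X2 Y2 R2 L D :: real
  assumes "R1 > 0" "R2 > 0" "\<bar>Y1 - Y2\<bar> < R1 + R2" "X1 + D * R1 = L" "X2 + D * R2 = L" "D = 1 \<or> D = -1"
  shows "\<exists>a b. \<bar>a - X1\<bar> < R1 \<and> \<bar>b - Y1\<bar> < R1 \<and> \<bar>a - X2\<bar> < R2 \<and> \<bar>b - Y2\<bar> < R2"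
proof -
  define a where "a = L - D * min R1 R2 / 2"
  define b where "b = (max (Y1 - R1) (Y2 - R2) + min (Y1 + R1) (Y2 + R2)) / 2"
  have "\<bar>a - X1\<bar> < R1 \<and> \<bar>b - Y1\<bar> < R1 \<and> \<bar>a - X2\<bar> < R2 \<and> \<bar>b - Y2\<bar> < R2"
  proof -
    define m where "m = min R1 R2"
    have m: "0 < m" "m \<le> R1" "m \<le> R2" using assms by (auto simp: m_def)
    define lo where "lo = max (Y1 - R1) (Y2 - R2)"
    define hi where "hi = min (Y1 + R1) (Y2 + R2)"
    have lh: "lo < hi" "Y1 - R1 \<le> lo" "Y2 - R2 \<le> lo" "hi \<le> Y1 + R1" "hi \<le> Y2 + R2"
      using assms(1,2,3) unfolding lo_def hi_def by (auto simp: abs_less_iff)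
    have bb: "b = (lo + hi) / 2" unfolding b_def lo_def hi_def by simp
    have aa: "a = L - D * m / 2" unfolding a_def m_def by simp
    have B: "\<bar>b - Y1\<bar> < R1 \<and> \<bar>b - Y2\<bar> < R2" unfolding bb abs_less_iff using lh by (simp add: field_simps)
    have A: "\<bar>a - X1\<bar> < R1 \<and> \<bar>a - X2\<bar> < R2"
      using assms(4,5,6) m unfolding aa by (auto simp: abs_less_iff)
    show ?thesis using A B by blast
  qed
  then show ?thesis by blast
qed
lemma core_corner:
  fixes ya rA yb rB yb' rB' ya'' rA'' :: real
  assumes "rA > 0" "rB > 0" "rB' > 0" "rA'' > 0"
  and sBB': "\<bar>yb - yb'\<bar> \<ge> rB + rB'"
  and sAA'': "\<bar>ya - ya''\<bar> \<ge> rA + rA''"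
  and aAB: "\<bar>ya - yb\<bar> \<le> rA + rB"
  and aB'A: "\<bar>yb' - ya\<bar> \<le> rB' + rA"
  and aA''B': "\<bar>ya'' - yb'\<bar> \<le> rA'' + rB'"
  and top: "ya'' + rA'' \<le> ya + rA"
  and low: "yb \<le> yb'"
  shows "yb + rB = ya - rA \<and> ya'' + rA'' = ya - rA \<and> yb' - rB' = ya - rA"
  using assms by (auto simp: abs_if split: if_splits)

lemma core_six:
  fixes ya rA yb rB yb' rB' ya'' rA'' ybt rBt yat rAt :: real
  assumes "rA > 0" "rB > 0" "rB' > 0" "rA'' > 0" "rBt > 0" "rAt > 0"
  and t1: "yb + rB = ya - rA" "ya'' + rA'' = ya - rA" "yb' - rB' = ya - rA"
  and s1: "\<bar>ybt - yb'\<bar> \<ge> rBt + rB'"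
  and s2: "\<bar>ybt - yb\<bar> \<ge> rBt + rB"
  and s3: "\<bar>yat - ya''\<bar> \<ge> rAt + rA''"
  and s4: "\<bar>yat - ya\<bar> \<ge> rAt + rA"
  and a1: "\<bar>ybt - ya''\<bar> \<le> rBt + rA''"
  and a2: "\<bar>yb - yat\<bar> \<le> rB + rAt"
  and top: "yat + rAt \<le> ya + rA"
  shows "rB = rA''"
  using assms by (auto simp: abs_if split: if_splits)

lemma prod_pm1:
  fixes e :: "nat \<Rightarrow> int"
  assumes "finite A" "\<forall>l\<in>A. e l = 1 \<or> e l = -1"
  shows "prod e A = (-1) ^ card {l\<in>A. e l = -1}"
proof -
  have "prod e A = prod (\<lambda>l. if e l = -1 then -1 else 1) A"
    by (rule prod.cong) (use assms in auto)
  also have "\<dots> = prod (\<lambda>_. -1) (A \<inter> {l. e l = -1}) * prod (\<lambda>_. 1) (A \<inter> - {l. e l = -1})"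
    by (rule prod.If_cases) (use assms in auto)
  also have "\<dots> = (-1) ^ card {l\<in>A. e l = -1}"
    by (simp add: Int_def)
  finally show ?thesis .
qed

lemma main_x:
  fixes n :: nat and r :: "nat \<Rightarrow> real" and p :: "nat \<Rightarrow> real \<times> real" and c :: "nat list"
  assumes pos: "\<forall>i\<in>{1..n}. r i > 0"
  and disj: "\<forall>i\<in>{1..n}. \<forall>j\<in>{1..n}. i \<noteq> j \<longrightarrow> (\<forall>a b. \<not>(\<bar>a - fst (p i)\<bar> < r i \<and> \<bar>b - snd (p i)\<bar> < r i \<and> \<bar>a - fst (p j)\<bar> < r j \<and> \<bar>b - snd (p j)\<bar> < r j))"
  and wg: "weak_generic n r"
  and len3: "length c \<ge> 3" and dist: "distinct c" and sub: "set c \<subseteq> {1..n}"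
  and edge: "\<forall>l < length c. r (c!l) + r (c!((l+1) mod length c)) = \<bar>fst (p (c!l)) - fst (p (c!((l+1) mod length c)))\<bar> \<and> \<bar>snd (p (c!l)) - snd (p (c!((l+1) mod length c)))\<bar> \<le> \<bar>fst (p (c!l)) - fst (p (c!((l+1) mod length c)))\<bar>"
  and len: "length c \<le> n - 2"
  shows "length c = 4 \<and> share_corner r p {c!0, c!1, c!2, c!3}"
proof -
  define k where "k = length c"
  define X where "X l = fst (p (c!l))" for l
  define Y where "Y l = snd (p (c!l))" for l
  define R where "R l = r (c!l)" for l
  define nx where "nx l = (if Suc l = k then 0 else Suc l)" for l
  define pv where "pv l = (if l = 0 then k - 1 else l - 1)" for l
  have k3: "k \<ge> 3" and kn: "k + 2 \<le> n" using len3 len k_def by auto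
  have cin: "\<And>l. l < k \<Longrightarrow> c!l \<in> {1..n}" using sub k_def nth_mem by blast
  have Rpos: "\<And>l. l < k \<Longrightarrow> R l > 0" unfolding R_def using pos cin by blast
  have nxk: "\<And>l. l<k \<Longrightarrow> nx l < k" using nx_def k3 by auto
  have pvk: "\<And>l. l<k \<Longrightarrow> pv l < k" using pv_def k3 by auto
  have nxpv: "\<And>l. l<k \<Longrightarrow> nx (pv l) = l" using nx_def pv_def k3 by auto
  have pvnx: "\<And>l. l<k \<Longrightarrow> pv (nx l) = l" using nx_def pv_def k3 by auto
  have nxmod: "\<And>l. l<k \<Longrightarrow> (l+1) mod k = nx l" using nx_def by auto
  have E: "\<And>l. l<k \<Longrightarrow> R l + R (nx l) = \<bar>X l - X (nx l)\<bar> \<and> \<bar>Y l - Y (nx l)\<bar> \<le> \<bar>X l - X (nx l)\<bar>"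
    using edge nxmod unfolding R_def X_def Y_def k_def by metis
  define d :: "nat \<Rightarrow> int" where "d l = (if X l \<le> X (nx l) then 1 else -1)" for l
  have d1: "\<And>l. d l = 1 \<or> d l = -1" using d_def by auto
  have dX: "\<And>l. l<k \<Longrightarrow> X (nx l) - X l = of_int (d l) * (R l + R (nx l))"
    using E d_def by (auto simp: abs_if)
  have reix: "\<And>g::nat \<Rightarrow> real. (\<Sum>l<k. g (nx l)) = (\<Sum>l<k. g l)"
    by (rule sum.reindex_bij_witness[where i=pv and j=nx]) (auto simp: nxk pvk nxpv pvnx)
  have reip: "\<And>g::nat \<Rightarrow> real. (\<Sum>l<k. g (pv l)) = (\<Sum>l<k. g l)"
    by (rule sum.reindex_bij_witness[where i=nx and j=pv]) (auto simp: nxk pvk nxpv pvnx)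
  have tele: "(\<Sum>l<k. of_int (d l) * (R l + R (nx l))) = 0"
  proof -
    have "(\<Sum>l<k. of_int (d l) * (R l + R (nx l))) = (\<Sum>l<k. X (nx l) - X l)"
      using dX by simp
    also have "\<dots> = 0" by (simp add: sum_subtractf reix)
    finally show ?thesis .
  qed

  define idx where "idx i = (THE l. l < k \<and> c!l = i)" for i
  have idx: "\<And>l. l<k \<Longrightarrow> idx (c!l) = l"
    unfolding idx_def by (rule the_equality) (auto simp: k_def nth_eq_iff_index_eq dist)
  have idxin: "\<And>i. i \<in> set c \<Longrightarrow> idx i < k \<and> c!(idx i) = i"
    by (metis idx in_set_conv_nth k_def)
  have cset: "\<And>l. l<k \<Longrightarrow> c!l \<in> set c" using k_def by simp
  define \<sigma> :: "nat \<Rightarrow> int" where "\<sigma> i = (if i \<in> set c then (d (idx i) + d (pv (idx i))) div 2 else 0)" for i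
  have \<sigma>c: "\<And>l. l<k \<Longrightarrow> 2 * \<sigma> (c!l) = d l + d (pv l)"
  proof -
    fix l assume l: "l < k"
    have "c!l \<in> set c" using l k_def by simp
    then show "2 * \<sigma> (c!l) = d l + d (pv l)" using d1[of l] d1[of "pv l"] l by (auto simp: \<sigma>_def idx)
  qed
  have S1: "(\<Sum>i\<in>{1..n}. of_int (\<sigma> i) * r i) = (\<Sum>i\<in>set c. of_int (\<sigma> i) * r i)"
    by (rule sum.mono_neutral_right) (use sub in \<open>auto simp: \<sigma>_def\<close>)
  have S2: "(\<Sum>i\<in>set c. of_int (\<sigma> i) * r i) = (\<Sum>l<k. of_int (\<sigma> (c!l)) * R l)"
    by (rule sum.reindex_bij_witness[where i="\<lambda>l. c!l" and j=idx]) (auto simp: idx idxin R_def cset)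
  have S3: "2 * (\<Sum>l<k. of_int (\<sigma> (c!l)) * R l) = (\<Sum>l<k. of_int (d l) * R l) + (\<Sum>l<k. of_int (d (pv l)) * R l)"
  proof -
    have "2 * (\<Sum>l<k. of_int (\<sigma> (c!l)) * R l) = (\<Sum>l<k. of_int (2 * \<sigma> (c!l)) * R l)"
      by (simp add: sum_distrib_left mult.assoc)
    also have "\<dots> = (\<Sum>l<k. of_int (d l) * R l + of_int (d (pv l)) * R l)"
      by (rule sum.cong) (auto simp: \<sigma>c algebra_simps)
    finally show ?thesis by (simp add: sum.distrib)
  qed
  have S4: "(\<Sum>l<k. of_int (d (pv l)) * R l) = (\<Sum>l<k. of_int (d l) * R (nx l))"
  proof -
    have "(\<Sum>l<k. of_int (d (pv l)) * R l) = (\<Sum>l<k. of_int (d (pv l)) * R (nx (pv l)))"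
      by (rule sum.cong) (auto simp: nxpv)
    also have "\<dots> = (\<Sum>l<k. of_int (d l) * R (nx l))" by (rule reip)
    finally show ?thesis .
  qed
  have sum0: "(\<Sum>i\<in>{1..n}. of_int (\<sigma> i) * r i) = 0"
    using S1 S2 S3 S4 tele by (simp add: sum.distrib distrib_left)

  have reipp: "\<And>g::nat \<Rightarrow> int. (\<Prod>l<k. g (pv l)) = (\<Prod>l<k. g l)"
    by (rule prod.reindex_bij_witness[where i=nx and j=pv]) (auto simp: nxk pvk nxpv pvnx)
  have dd1: "\<And>l m. d l * d m = 1 \<or> d l * d m = -1"
  proof -
    fix l m show "d l * d m = 1 \<or> d l * d m = -1" using d1[of l] d1[of m] by auto
  qed
  define Ch where "Ch = {l\<in>{..<k}. d l * d (pv l) = -1}"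
  have Chd: "\<And>l. l \<in> Ch \<longleftrightarrow> l < k \<and> d l \<noteq> d (pv l)"
  proof -
    fix l show "l \<in> Ch \<longleftrightarrow> l < k \<and> d l \<noteq> d (pv l)"
      unfolding Ch_def using d1[of l] d1[of "pv l"] by auto
  qed
  have "(\<Prod>l<k. d l * d (pv l)) = (-1) ^ card Ch"
    unfolding Ch_def by (rule prod_pm1) (use dd1 in auto)
  moreover have "(\<Prod>l<k. d l * d (pv l)) = 1"
  proof -
    have "(\<Prod>l<k. d l * d (pv l)) = (\<Prod>l<k. d l) * (\<Prod>l<k. d (pv l))" by (rule prod.distrib)
    also have "\<dots> = (\<Prod>l<k. d l * d l)" by (simp add: reipp prod.distrib)
    also have "\<dots> = 1"
    proof (rule prod.neutral, rule ballI)
      fix x show "d x * d x = 1" using d1[of x] by auto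
    qed
    finally show ?thesis .
  qed
  ultimately have evCh: "even (card Ch)" by (metis neg_one_odd_power one_neq_neg_one)
  have Chne: "card Ch \<noteq> 0"
  proof
    assume "card Ch = 0"
    then have "Ch = {}" unfolding Ch_def by simp
    then have dd: "\<And>l. l < k \<Longrightarrow> d l = d (pv l)" using Chd by blast
    have dc: "\<And>l. l < k \<Longrightarrow> d l = d 0"
    proof -
      fix l show "l < k \<Longrightarrow> d l = d 0"
      proof (induction l)
        case (Suc l)
        then have "d (Suc l) = d (pv (Suc l))" using dd by blast
        then show ?case using Suc pv_def by simp
      qed simp
    qed
    have "(\<Sum>l<k. of_int (d l) * (R l + R (nx l))) = of_int (d 0) * (\<Sum>l<k. (R l + R (nx l)))"
      unfolding sum_distrib_left
    proof (rule sum.cong[OF refl])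
      fix l assume "l \<in> {..<k}"
      then have "d l = d 0" using dc[of l] by simp
      then show "of_int (d l) * (R l + R (nx l)) = of_int (d 0) * (R l + R (nx l))" by simp
    qed
    moreover have "(\<Sum>l<k. (R l + R (nx l))) > 0"
      by (rule sum_pos) (use k3 Rpos nxk in \<open>auto intro: add_pos_pos simp: lessThan_empty_iff\<close>)
    ultimately show False using tele d1[of 0] by auto
  qed
  have Ch2: "card Ch \<ge> 2" using evCh Chne by presburger
  define Z where "Z = {i\<in>{1..n}. \<sigma> i = 0}"
  have Z1: "{1..n} - set c \<subseteq> Z" unfolding Z_def \<sigma>_def by auto
  have Z2: "(\<lambda>l. c!l) ` Ch \<subseteq> Z"
  proof
    fix i assume "i \<in> (\<lambda>l. c!l) ` Ch"
    then obtain l where l: "l \<in> Ch" "i = c!l" by auto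
    then have "l < k" "d l \<noteq> d (pv l)" using Chd by auto
    then have "2 * \<sigma> i = 0" using \<sigma>c l d1[of l] d1[of "pv l"] by auto
    then show "i \<in> Z" unfolding Z_def using cin \<open>l<k\<close> l by auto
  qed
  have cardZ: "card Z \<ge> 4"
  proof -
    have fin: "finite Z" unfolding Z_def by simp
    have "card ({1..n} - set c) = n - k"
      using sub by (simp add: card_Diff_subset distinct_card dist k_def)
    moreover have "card ((\<lambda>l. c!l) ` Ch) = card Ch"
      by (rule card_image, rule inj_on_nth) (use dist Chd k_def in auto)
    moreover have "({1..n} - set c) \<inter> (\<lambda>l. c!l) ` Ch = {}" using Chd cset by auto
    ultimately have "card (({1..n} - set c) \<union> (\<lambda>l. c!l) ` Ch) = n - k + card Ch"
      by (subst card_Un_disjoint) (auto simp: Ch_def)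
    moreover have "card (({1..n} - set c) \<union> (\<lambda>l. c!l) ` Ch) \<le> card Z"
      by (rule card_mono[OF fin]) (use Z1 Z2 in auto)
    ultimately show ?thesis using Ch2 kn by linarith
  qed
  have all0: "\<forall>i\<in>{1..n}. \<sigma> i = 0"
    using wg unfolding weak_generic_def
  proof (elim allE impE)
    show "(\<forall>i\<in>{1..n}. \<sigma> i \<in> {-1,0,1}) \<and> 4 \<le> card {i\<in>{1..n}. \<sigma> i = 0} \<and> (\<Sum>i\<in>{1..n}. of_int (\<sigma> i) * r i) = 0"
    proof (intro conjI ballI)
      fix i assume "i \<in> {1..n}"
      show "\<sigma> i \<in> {-1,0,1}" using d1[of "idx i"] d1[of "pv (idx i)"] by (auto simp: \<sigma>_def)
    next
      show "4 \<le> card {i\<in>{1..n}. \<sigma> i = 0}" using cardZ Z_def by simp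
    next
      show "(\<Sum>i\<in>{1..n}. of_int (\<sigma> i) * r i) = 0" using sum0 .
    qed
  qed
  have alt: "\<And>l. l < k \<Longrightarrow> d (nx l) = - d l"
  proof -
    fix l assume l: "l < k"
    have "2 * \<sigma> (c!nx l) = 0" using all0 cin nxk l by auto
    then show "d (nx l) = - d l" using \<sigma>c[OF nxk[OF l]] pvnx l by auto
  qed

  have altp: "\<And>l. l < k \<Longrightarrow> d (pv l) = - d l"
  proof -
    fix l assume l: "l < k"
    show "d (pv l) = - d l" using alt[OF pvk[OF l]] nxpv[OF l] by simp
  qed
  have dpow: "\<And>l. l < k \<Longrightarrow> d l = (-1)^l * d 0"
  proof -
    fix l show "l < k \<Longrightarrow> d l = (-1)^l * d 0"
    proof (induction l)
      case (Suc l)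
      then have "nx l = Suc l" using nx_def by simp
      then show ?case using alt[of l] Suc by simp
    qed simp
  qed
  have keven: "even k"
  proof (rule ccontr)
    assume odd: "odd k"
    have "nx (k - 1) = 0" using k3 nx_def by simp
    then have "d 0 = - d (k - 1)" using alt[of "k - 1"] k3 by simp
    also have "d (k - 1) = d 0" using dpow[of "k - 1"] k3 odd by simp
    finally show False using d1[of 0] by simp
  qed
  define L where "L = X 0 + of_int (d 0) * R 0"
  have inv: "\<And>l. l < k \<Longrightarrow> X l + of_int (d l) * R l = L"
  proof -
    fix l show "l < k \<Longrightarrow> X l + of_int (d l) * R l = L"
    proof (induction l)
      case 0 then show ?case using L_def by simp
    next
      case (Suc l)
      then have nxl: "nx l = Suc l" using nx_def by simp
      have "X (Suc l) = X l + of_int (d l) * (R l + R (Suc l))" using dX[of l] Suc nxl by simp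
      moreover have "d (Suc l) = - d l" using alt[of l] Suc nxl by simp
      ultimately show ?case using Suc by (simp add: algebra_simps)
    qed
  qed
  have same: "\<And>l m. l < k \<Longrightarrow> m < k \<Longrightarrow> l \<noteq> m \<Longrightarrow> d l = d m \<Longrightarrow> \<bar>Y l - Y m\<bar> \<ge> R l + R m"
  proof (rule ccontr)
    fix l m assume l: "l < k" and m: "m < k" and lm: "l \<noteq> m" and dlm: "d l = d m"
      and nt: "\<not> \<bar>Y l - Y m\<bar> \<ge> R l + R m"
    have "\<exists>a b. \<bar>a - X l\<bar> < R l \<and> \<bar>b - Y l\<bar> < R l \<and> \<bar>a - X m\<bar> < R m \<and> \<bar>b - Y m\<bar> < R m"
      by (rule open_meet[where L=L and D="of_int (d l)"]) (use Rpos l m nt inv[OF l] inv[OF m] dlm d1[of l] in auto)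
    moreover have "c!l \<noteq> c!m" using l m lm dist k_def by (simp add: nth_eq_iff_index_eq)
    ultimately show False using disj cin[OF l] cin[OF m] unfolding X_def Y_def R_def by blast
  qed
  have adj: "\<And>l. l < k \<Longrightarrow> \<bar>Y l - Y (nx l)\<bar> \<le> R l + R (nx l)"
    using E by force
  define S where "S = {l. l < k \<and> d l = d 0}"
  have finS: "finite S" unfolding S_def by simp
  have S0: "0 \<in> S" unfolding S_def using k3 by simp
  define MX where "MX = Max ((\<lambda>l. Y l + R l) ` S)"
  have "MX \<in> (\<lambda>l. Y l + R l) ` S" unfolding MX_def using finS S0 by (intro Max_in) auto
  then obtain m where mS: "m \<in> S" and mmax: "Y m + R m = MX" by auto
  have maxm: "\<And>l. l \<in> S \<Longrightarrow> Y l + R l \<le> Y m + R m"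
    unfolding mmax MX_def using finS by (intro Max_ge) auto
  have mk: "m < k" and dm: "d m = d 0" using mS S_def by auto
  define P1 where "P1 = nx m"
  define P2 where "P2 = nx P1"
  define P3 where "P3 = nx P2"
  define M1 where "M1 = pv m"
  define M2 where "M2 = pv M1"
  define M3 where "M3 = pv M2"
  have ks: "k = 4 \<or> k \<ge> 6" using k3 keven by presburger
  have lt: "P1 < k" "P2 < k" "P3 < k" "M1 < k" "M2 < k" "M3 < k"
    unfolding P1_def P2_def P3_def M1_def M2_def M3_def using mk nxk pvk by auto
  have nxs: "nx P1 = P2" "nx P2 = P3" "nx M1 = m" "nx M2 = M1" "nx M3 = M2"
    unfolding P1_def P2_def P3_def M1_def M2_def M3_def using mk nxpv pvk by auto
  have ds: "d P1 = - d m" "d P2 = d m" "d P3 = - d m" "d M1 = - d m" "d M2 = d m" "d M3 = - d m"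
    unfolding P1_def P2_def P3_def M1_def M2_def M3_def using mk nxk pvk alt altp by auto
  have dist4: "m \<noteq> P1" "m \<noteq> M1" "P1 \<noteq> M1" "m \<noteq> P2" "m \<noteq> M2" "P1 \<noteq> M2" "M1 \<noteq> P2"
    unfolding P1_def P2_def P3_def M1_def M2_def M3_def nx_def pv_def using mk ks by auto
  have dist6: "k \<ge> 6 \<Longrightarrow> M3 \<noteq> P1 \<and> P2 \<noteq> M2 \<and> P3 \<noteq> M1 \<and> P3 \<noteq> P1 \<and> M3 \<noteq> M1"
    unfolding P1_def P2_def P3_def M1_def M2_def M3_def nx_def pv_def using mk by auto

  have adjs: "\<And>l. l < k \<Longrightarrow> \<bar>Y l - Y (nx l)\<bar> \<le> R l + R (nx l) \<and> \<bar>Y (nx l) - Y l\<bar> \<le> R (nx l) + R l"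
    using adj by (simp add: abs_minus_commute add.commute)
  have corner: "\<And>l t. l < k \<Longrightarrow> Y l + R l = t \<or> Y l - R l = t \<Longrightarrow> (L, t) \<in> corners (r (c!l)) (p (c!l))"
  proof -
    fix l t assume l: "l < k" and t: "Y l + R l = t \<or> Y l - R l = t"
    have Lx: "L = X l + of_int (d l) * R l" using inv[OF l] by simp
    obtain b :: real where b: "b \<in> {-1,1}" "t = Y l + b * R l" using t by (metis add_uminus_conv_diff insertCI mult_1 mult_minus_left)
    have "of_int (d l) \<in> {-1::real, 1}" using d1[of l] by auto
    then show "(L, t) \<in> corners (r (c!l)) (p (c!l))"
      unfolding corners_def using b Lx unfolding X_def Y_def R_def by blast
  qed
  have Sm: "P2 \<in> S" "M2 \<in> S" using lt ds dm S_def by auto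
  have Rp: "R m > 0" "R P1 > 0" "R P2 > 0" "R P3 > 0" "R M1 > 0" "R M2 > 0" "R M3 > 0"
    using Rpos mk lt by auto
  have n6: "n \<ge> 6" using kn ks by auto
  have cP: "\<And>l l'. l < k \<Longrightarrow> l' < k \<Longrightarrow> l \<noteq> l' \<Longrightarrow> c!l \<noteq> c!l'"
    using dist k_def by (simp add: nth_eq_iff_index_eq)
  have fin4: "k = 4 \<Longrightarrow> share_corner r p {c!0, c!1, c!2, c!3}" if
    tt: "(\<forall>j. j = m \<or> j = P1 \<or> j = M1 \<or> j = M2 \<longrightarrow> Y j + R j = t \<or> Y j - R j = t)" for t
  proof -
    assume k4: "k = 4"
    have "\<forall>j<4. j = m \<or> j = P1 \<or> j = M1 \<or> j = M2"
      unfolding P1_def M1_def M2_def nx_def pv_def using mk k4 by auto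
    then have "\<forall>j<4. (L, t) \<in> corners (r (c!j)) (p (c!j))"
      using corner tt k4 by auto
    then show ?thesis unfolding share_corner_def
      by (intro exI[of _ "(L, t)"]) (auto simp: numeral_eq_Suc)
  qed
  have ad: "\<bar>Y m - Y P1\<bar> \<le> R m + R P1" "\<bar>Y M1 - Y m\<bar> \<le> R M1 + R m"
     "\<bar>Y M2 - Y M1\<bar> \<le> R M2 + R M1" "\<bar>Y M3 - Y M2\<bar> \<le> R M3 + R M2"
     "\<bar>Y P1 - Y P2\<bar> \<le> R P1 + R P2" "\<bar>Y P2 - Y P3\<bar> \<le> R P2 + R P3"
    using adj[OF mk] adj[OF lt(4)] adj[OF lt(5)] adj[OF lt(6)] adj[OF lt(1)] adj[OF lt(2)] nxs
    unfolding P1_def by simp_all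
  have ad': "\<bar>Y P1 - Y m\<bar> \<le> R P1 + R m" "\<bar>Y m - Y M1\<bar> \<le> R m + R M1"
     "\<bar>Y M1 - Y M2\<bar> \<le> R M1 + R M2" "\<bar>Y M2 - Y M3\<bar> \<le> R M2 + R M3"
     "\<bar>Y P2 - Y P1\<bar> \<le> R P2 + R P1" "\<bar>Y P3 - Y P2\<bar> \<le> R P3 + R P2"
    using ad by (simp_all add: abs_minus_commute add.commute)
  have sm: "R P1 + R M1 \<le> \<bar>Y P1 - Y M1\<bar>" "R m + R M2 \<le> \<bar>Y m - Y M2\<bar>" "R m + R P2 \<le> \<bar>Y m - Y P2\<bar>"
    "R M1 + R P1 \<le> \<bar>Y M1 - Y P1\<bar>"
    using same[OF lt(1) lt(4) dist4(3)] same[OF mk lt(5) dist4(5)] same[OF mk lt(2) dist4(4)]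
      same[OF lt(4) lt(1) dist4(3)[symmetric]] ds by simp_all
  have sm6: "R M3 + R M1 \<le> \<bar>Y M3 - Y M1\<bar>" "R M3 + R P1 \<le> \<bar>Y M3 - Y P1\<bar>"
    "R P2 + R M2 \<le> \<bar>Y P2 - Y M2\<bar>" "R P2 + R m \<le> \<bar>Y P2 - Y m\<bar>"
    "R P3 + R P1 \<le> \<bar>Y P3 - Y P1\<bar>" "R P3 + R M1 \<le> \<bar>Y P3 - Y M1\<bar>"
    "R M2 + R P2 \<le> \<bar>Y M2 - Y P2\<bar>" "R M2 + R m \<le> \<bar>Y M2 - Y m\<bar>"
    if k6: "k \<ge> 6"
  proof -
    have D: "M3 \<noteq> P1" "P2 \<noteq> M2" "P3 \<noteq> M1" "P3 \<noteq> P1" "M3 \<noteq> M1" using dist6[OF k6] by auto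
    show "R M3 + R M1 \<le> \<bar>Y M3 - Y M1\<bar>" by (rule same[OF lt(6) lt(4) D(5)]) (simp add: ds)
    show "R M3 + R P1 \<le> \<bar>Y M3 - Y P1\<bar>" by (rule same[OF lt(6) lt(1) D(1)]) (simp add: ds)
    show "R P2 + R M2 \<le> \<bar>Y P2 - Y M2\<bar>" by (rule same[OF lt(2) lt(5) D(2)]) (simp add: ds)
    show "R P2 + R m \<le> \<bar>Y P2 - Y m\<bar>" by (rule same[OF lt(2) mk dist4(4)[symmetric]]) (simp add: ds)
    show "R P3 + R P1 \<le> \<bar>Y P3 - Y P1\<bar>" by (rule same[OF lt(3) lt(1) D(4)]) (simp add: ds)
    show "R P3 + R M1 \<le> \<bar>Y P3 - Y M1\<bar>" by (rule same[OF lt(3) lt(4) D(3)]) (simp add: ds)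
    show "R M2 + R P2 \<le> \<bar>Y M2 - Y P2\<bar>" by (rule same[OF lt(5) lt(2) D(2)[symmetric]]) (simp add: ds)
    show "R M2 + R m \<le> \<bar>Y M2 - Y m\<bar>" by (rule same[OF lt(5) mk dist4(5)[symmetric]]) (simp add: ds)
  qed
  have top: "Y P2 + R P2 \<le> Y m + R m" "Y M2 + R M2 \<le> Y m + R m" using maxm Sm by auto
  show ?thesis
  proof (cases "Y P1 \<le> Y M1")
    case True
    have T: "Y P1 + R P1 = Y m - R m \<and> Y M2 + R M2 = Y m - R m \<and> Y M1 - R M1 = Y m - R m"
      by (rule core_corner[OF Rp(1) Rp(2) Rp(5) Rp(6) sm(1) sm(2) ad(1) ad(2) ad(3) top(2) True])
    show ?thesis
    proof (cases "k = 4")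
      case True
      have "share_corner r p {c!0, c!1, c!2, c!3}" by (rule fin4[of "Y m - R m", OF _ True]) (use T in auto)
      then show ?thesis using True k_def by simp
    next
      case False
      then have k6: "k \<ge> 6" using ks by simp
      have "R P1 = R M2"
        by (rule core_six[OF Rp(1) Rp(2) Rp(5) Rp(6) Rp(7) Rp(3) _ _ _ sm6(1)[OF k6] sm6(2)[OF k6] sm6(3)[OF k6]
              sm6(4)[OF k6] ad(4) ad(5) top(1)]) (use T in auto)
      moreover have "r (c!P1) \<noteq> r (c!M2)"
        by (rule wg_pair[OF wg cin cin cP n6]) (use lt dist4 in auto)
      ultimately show ?thesis unfolding R_def by simp
    qed
  next
    case False
    then have F: "Y M1 \<le> Y P1" by simp
    have T: "Y M1 + R M1 = Y m - R m \<and> Y P2 + R P2 = Y m - R m \<and> Y P1 - R P1 = Y m - R m"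
      by (rule core_corner[OF Rp(1) Rp(5) Rp(2) Rp(3) sm(4) sm(3) ad'(2) ad'(1) ad'(5) top(1) F])
    show ?thesis
    proof (cases "k = 4")
      case True
      have "P2 = M2" unfolding P2_def P1_def M2_def M1_def nx_def pv_def using True mk by auto
      have "share_corner r p {c!0, c!1, c!2, c!3}" by (rule fin4[of "Y m - R m", OF _ True]) (use T \<open>P2 = M2\<close> in auto)
      then show ?thesis using True k_def by simp
    next
      case False
      then have k6: "k \<ge> 6" using ks by simp
      have "R M1 = R P2"
        by (rule core_six[OF Rp(1) Rp(5) Rp(2) Rp(3) Rp(4) Rp(6) _ _ _ sm6(5)[OF k6] sm6(6)[OF k6] sm6(7)[OF k6]
              sm6(8)[OF k6] ad'(6) ad'(3) top(2)]) (use T in auto)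
      moreover have "r (c!M1) \<noteq> r (c!P2)"
        by (rule wg_pair[OF wg cin cin cP n6]) (use lt dist4 in auto)
      ultimately show ?thesis unfolding R_def by simp
    qed
  qed
qed


lemma box_interior:
  "{q. \<bar>fst q - fst p\<bar> < r \<and> \<bar>snd q - snd p\<bar> < r} \<subseteq> interior (sq r p)"
proof (rule interior_maximal)
  show "{q. \<bar>fst q - fst p\<bar> < r \<and> \<bar>snd q - snd p\<bar> < r} \<subseteq> sq r p" unfolding sq_def by auto
  show "open {q. \<bar>fst q - fst p\<bar> < r \<and> \<bar>snd q - snd p\<bar> < r}"
    by (intro open_Collect_conj open_Collect_less continuous_intros)
qed

lemma packing_disj:
  assumes "homothetic_packing n r p"
  shows "\<forall>i\<in>{1..n}. \<forall>j\<in>{1..n}. i \<noteq> j \<longrightarrow> (\<forall>a b. \<not>(\<bar>a - fst (p i)\<bar> < r i \<and> \<bar>b - snd (p i)\<bar> < r i \<and> \<bar>a - fst (p j)\<bar> < r j \<and> \<bar>b - snd (p j)\<bar> < r j))"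
proof (intro ballI impI allI notI)
  fix i j a b assume i: "i \<in> {1..n}" and j: "j \<in> {1..n}" and ij: "i \<noteq> j"
    and h: "\<bar>a - fst (p i)\<bar> < r i \<and> \<bar>b - snd (p i)\<bar> < r i \<and> \<bar>a - fst (p j)\<bar> < r j \<and> \<bar>b - snd (p j)\<bar> < r j"
  have "(a, b) \<in> interior (sq (r i) (p i))" using h box_interior[of "p i" "r i"] by auto
  moreover have "(a, b) \<in> interior (sq (r j) (p j))" using h box_interior[of "p j" "r j"] by auto
  ultimately show False using assms i j ij unfolding homothetic_packing_def by blast
qed

lemma edges_x_cond:
  assumes "{u, v} \<in> edges_x n r p"
  shows "r u + r v = \<bar>fst (p u) - fst (p v)\<bar> \<and> \<bar>snd (p u) - snd (p v)\<bar> \<le> \<bar>fst (p u) - fst (p v)\<bar>"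
proof -
  obtain i j where e: "{u, v} = {i, j}" and c: "r i + r j = \<bar>fst (p i) - fst (p j)\<bar>"
    "\<bar>fst (p i) - fst (p j)\<bar> \<ge> \<bar>snd (p i) - snd (p j)\<bar>"
    using assms unfolding edges_x_def by blast
  from e have "(u = i \<and> v = j) \<or> (u = j \<and> v = i)" by (auto simp: doubleton_eq_iff)
  then show ?thesis using c by (auto simp: abs_minus_commute add.commute)
qed

lemma edges_y_cond:
  assumes "{u, v} \<in> edges_y n r p"
  shows "r u + r v = \<bar>snd (p u) - snd (p v)\<bar> \<and> \<bar>fst (p u) - fst (p v)\<bar> \<le> \<bar>snd (p u) - snd (p v)\<bar>"
proof -
  obtain i j where e: "{u, v} = {i, j}" and c: "r i + r j = \<bar>snd (p i) - snd (p j)\<bar>"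
    "\<bar>snd (p i) - snd (p j)\<bar> \<ge> \<bar>fst (p i) - fst (p j)\<bar>"
    using assms unfolding edges_y_def by blast
  from e have "(u = i \<and> v = j) \<or> (u = j \<and> v = i)" by (auto simp: doubleton_eq_iff)
  then show ?thesis using c by (auto simp: abs_minus_commute add.commute)
qed

theorem lemma17:
  fixes n :: nat and r :: "nat \<Rightarrow> real" and p :: "nat \<Rightarrow> real \<times> real" and c :: "nat list"
  assumes "homothetic_packing n r p"
    and "weak_generic n r"
    and "is_cycle n (edges_x n r p) c \<or> is_cycle n (edges_y n r p) c"
    and "length c \<le> n - 2"
  shows "length c = 4 \<and> share_corner r p {c ! 0, c ! 1, c ! 2, c ! 3}"
proof -
  have pos: "\<forall>i\<in>{1..n}. r i > 0" using assms(1) unfolding homothetic_packing_def by blast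
  have disj: "\<forall>i\<in>{1..n}. \<forall>j\<in>{1..n}. i \<noteq> j \<longrightarrow> (\<forall>a b. \<not>(\<bar>a - fst (p i)\<bar> < r i \<and> \<bar>b - snd (p i)\<bar> < r i \<and> \<bar>a - fst (p j)\<bar> < r j \<and> \<bar>b - snd (p j)\<bar> < r j))"
    by (rule packing_disj[OF assms(1)])
  from assms(3) show ?thesis
  proof
    assume cy: "is_cycle n (edges_x n r p) c"
    show ?thesis
    proof (rule main_x[OF pos disj assms(2) _ _ _ _ assms(4)])
      show "3 \<le> length c" "distinct c" "set c \<subseteq> {1..n}" using cy unfolding is_cycle_def by auto
      show "\<forall>l<length c. r (c ! l) + r (c ! ((l + 1) mod length c)) = \<bar>fst (p (c ! l)) - fst (p (c ! ((l + 1) mod length c)))\<bar> \<and>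
        \<bar>snd (p (c ! l)) - snd (p (c ! ((l + 1) mod length c)))\<bar> \<le> \<bar>fst (p (c ! l)) - fst (p (c ! ((l + 1) mod length c)))\<bar>"
        using cy edges_x_cond unfolding is_cycle_def by blast
    qed
  next
    assume cy: "is_cycle n (edges_y n r p) c"
    define q where "q i = prod.swap (p i)" for i
    have disj': "\<forall>i\<in>{1..n}. \<forall>j\<in>{1..n}. i \<noteq> j \<longrightarrow> (\<forall>a b. \<not>(\<bar>a - fst (q i)\<bar> < r i \<and> \<bar>b - snd (q i)\<bar> < r i \<and> \<bar>a - fst (q j)\<bar> < r j \<and> \<bar>b - snd (q j)\<bar> < r j))"
      using disj unfolding q_def by auto
    have "length c = 4 \<and> share_corner r q {c ! 0, c ! 1, c ! 2, c ! 3}"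
    proof (rule main_x[OF pos disj' assms(2) _ _ _ _ assms(4)])
      show "3 \<le> length c" "distinct c" "set c \<subseteq> {1..n}" using cy unfolding is_cycle_def by auto
      show "\<forall>l<length c. r (c ! l) + r (c ! ((l + 1) mod length c)) = \<bar>fst (q (c ! l)) - fst (q (c ! ((l + 1) mod length c)))\<bar> \<and>
        \<bar>snd (q (c ! l)) - snd (q (c ! ((l + 1) mod length c)))\<bar> \<le> \<bar>fst (q (c ! l)) - fst (q (c ! ((l + 1) mod length c)))\<bar>"
        using cy edges_y_cond unfolding is_cycle_def q_def by fastforce
    qed
    moreover have "share_corner r q I \<Longrightarrow> share_corner r p I" for I
    proof -
      assume "share_corner r q I"
      then obtain z where z: "\<forall>i\<in>I. z \<in> corners (r i) (q i)" unfolding share_corner_def by blast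
      have "\<forall>i\<in>I. prod.swap z \<in> corners (r i) (p i)"
      proof
        fix i assume "i \<in> I"
        then obtain a b where "a \<in> {-1,1}" "b \<in> {-1,1}" "z = (fst (q i) + a * r i, snd (q i) + b * r i)"
          using z unfolding corners_def by blast
        then show "prod.swap z \<in> corners (r i) (p i)" unfolding corners_def q_def by auto
      qed
      then show "share_corner r p I" unfolding share_corner_def by blast
    qed
    ultimately show ?thesis by blast
  qed
qed

end
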